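(* Let $q$ be a prime power and let $f,g:\mathbb{N}\to\mathbb{C}$ be functions, neither identically zero, such that \[ g(n)=\sum_{k=1}^{n}\binom{n-1}{k-1}_q f(k)\quad\text{for all } n\in\mathbb{N}. \] Then at least one of $\{n: f(n)\neq0\}$ and $\{n:g(n)\neq 0\}$ is infinite.
   Context: The $q$-binomial coefficient is $\binom{n}{k}_q=\frac{[n]!_q}{[k]!_q[n-k]!_q}$ where $[n]!_q=\prod_{d=1}^n\frac{q^d-1}{q-1}$. *)

theory Defs
  imports "HOL-Analysis.Analysis" "HOL-Computational_Algebra.Primes"
begin

definition qfact :: "nat \<Rightarrow> nat \<Rightarrow> complex" where
  "qfact q n = (\<Prod>d=1..n. (of_nat q ^ d - 1) / (of_nat q - 1))"

text \<open>q-binomial coefficient binom(n,k)_q = [n]!_q / ([k]!_q [n-k]!_q) (used only for k \<le> n).\<close>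
definition qbinom :: "nat \<Rightarrow> nat \<Rightarrow> nat \<Rightarrow> complex" where
  "qbinom q n k = qfact q n / (qfact q k * qfact q (n - k))"

definition prime_power :: "nat \<Rightarrow> bool" where
  "prime_power q \<longleftrightarrow> (\<exists>p e. prime p \<and> e \<ge> 1 \<and> q = p ^ e)"

end

theory Submission
  imports Defs "HOL-Computational_Algebra.Polynomial"
begin

lemma pp_ge2: "prime_power q \<Longrightarrow> q \<ge> 2"
proof -
  assume "prime_power q"
  then obtain p e where "prime p" "e \<ge> 1" "q = p ^ e" unfolding prime_power_def by blast
  moreover have "p \<ge> 2" using \<open>prime p\<close> prime_ge_2_nat by blast
  ultimately have "p ^ 1 \<le> p ^ e" by (intro power_increasing) auto
  thus "q \<ge> 2" using \<open>p \<ge> 2\<close> \<open>q = p^e\<close> by simp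
qed

lemma qpow_ne1:
  assumes "q \<ge> 2" "d \<ge> 1"
  shows "(of_nat q :: complex) ^ d - 1 \<noteq> 0"
proof
  assume "(of_nat q :: complex) ^ d - 1 = 0"
  hence "(of_nat (q ^ d) :: complex) = of_nat 1" by simp
  hence "q ^ d = 1" using of_nat_eq_iff by blast
  moreover have "q ^ 1 \<le> q ^ d" using assms by (intro power_increasing) auto
  ultimately show False using assms by simp
qed

lemma qfact_Suc: "qfact q (Suc k) = qfact q k * ((of_nat q ^ Suc k - 1) / (of_nat q - 1))"
  unfolding qfact_def by (simp add: prod.cl_ivl_Suc mult.commute)

lemma qfact_nz: "q \<ge> 2 \<Longrightarrow> qfact q k \<noteq> 0"
proof (induction k)
  case 0 thus ?case by (simp add: qfact_def)
next
  case (Suc k)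
  have "(of_nat q :: complex) ^ 1 - 1 \<noteq> 0" using qpow_ne1[OF Suc.prems, of 1] by simp
  thus ?case using Suc qpow_ne1[OF Suc.prems, of "Suc k"] by (simp add: qfact_Suc)
qed

lemma qbinom_Suc:
  assumes "q \<ge> 2" "j < n"
  shows "qbinom q n (Suc j) = qbinom q n j * ((of_nat q ^ (n - j) - 1) / (of_nat q ^ Suc j - 1))"
proof -
  obtain r where r: "n - j = Suc r" using assms by (metis Suc_diff_Suc)
  have nr: "n - Suc j = r" using r by simp
  have q1: "(of_nat q :: complex) - 1 \<noteq> 0" using qpow_ne1[OF assms(1), of 1] by simp
  have a: "(of_nat q :: complex) ^ Suc j - 1 \<noteq> 0" using qpow_ne1[OF assms(1), of "Suc j"] by simp
  have b: "(of_nat q :: complex) ^ Suc r - 1 \<noteq> 0" using qpow_ne1[OF assms(1), of "Suc r"] by simp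
  have gen: "\<And>A B C x y d::complex. B \<noteq> 0 \<Longrightarrow> C \<noteq> 0 \<Longrightarrow> x \<noteq> 0 \<Longrightarrow> y \<noteq> 0 \<Longrightarrow> d \<noteq> 0 \<Longrightarrow>
     A / (B * (x / d) * C) = A / (B * (C * (y / d))) * (y / x)"
    by (simp add: field_simps)
  show ?thesis unfolding qbinom_def nr r qfact_Suc
    by (rule gen) (use qfact_nz[OF assms(1)] q1 a b in auto)
qed

primrec P :: "nat \<Rightarrow> nat \<Rightarrow> complex poly" where
  "P q 0 = 1"
| "P q (Suc j) = P q j * [: -1 / (of_nat q ^ Suc j - 1), 1 / (of_nat q ^ j * (of_nat q ^ Suc j - 1)) :]"

lemma P_eval:
  assumes "q \<ge> 2" "j \<le> n"
  shows "poly (P q j) (of_nat q ^ n) = qbinom q n j"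
  using assms(2)
proof (induction j)
  case 0
  have "qfact q 0 = 1" by (simp add: qfact_def)
  then show ?case using qfact_nz[OF assms(1), of n] by (simp add: qbinom_def)
next
  case (Suc j)
  have a: "(of_nat q :: complex) ^ Suc j - 1 \<noteq> 0" using qpow_ne1[OF assms(1), of "Suc j"] by simp
  have qn: "(of_nat q :: complex) \<noteq> 0" using assms(1) by simp
  have pd: "(of_nat q :: complex) ^ n / of_nat q ^ j = of_nat q ^ (n - j)"
    using Suc.prems qn by (simp add: power_diff)
  have "poly (P q (Suc j)) (of_nat q ^ n) = qbinom q n j *
      (-1 / (of_nat q ^ Suc j - 1) + of_nat q ^ n / (of_nat q ^ j * (of_nat q ^ Suc j - 1)))"
    using Suc by (simp add: algebra_simps)
  also have "\<dots> = qbinom q n j * ((of_nat q ^ n / of_nat q ^ j - 1) / (of_nat q ^ Suc j - 1))"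
  proof -
    have gen: "\<And>B X Y c :: complex. Y \<noteq> 0 \<Longrightarrow> c \<noteq> 0 \<Longrightarrow>
       B * (-1 / c + X / (Y * c)) = B * ((X / Y - 1) / c)" by (simp add: field_simps)
    show ?thesis by (rule gen) (use a qn in auto)
  qed
  also have "\<dots> = qbinom q n (Suc j)"
    using qbinom_Suc[OF assms(1), of j n] Suc.prems pd by simp
  finally show ?case .
qed

lemma P_deg:
  assumes "q \<ge> 2"
  shows "degree (P q j) = j \<and> coeff (P q j) j \<noteq> 0"
proof (induction j)
  case 0 then show ?case by simp
next
  case (Suc j)
  have a: "(of_nat q :: complex) ^ Suc j - 1 \<noteq> 0" using qpow_ne1[OF assms, of "Suc j"] by simp
  have qn: "(of_nat q :: complex) \<noteq> 0" using assms by simp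
  define L :: "complex poly" where "L = [: -1 / (of_nat q ^ Suc j - 1), 1 / (of_nat q ^ j * (of_nat q ^ Suc j - 1)) :]"
  have c1: "coeff L 1 = 1 / (of_nat q ^ j * (of_nat q ^ Suc j - 1))" by (simp add: L_def)
  have "(of_nat q :: complex) ^ j \<noteq> 0" using qn by simp
  hence c2: "coeff L 1 \<noteq> 0" unfolding c1 using a by (metis divide_eq_0_iff mult_eq_0_iff one_neq_zero)
  have L1: "degree L = 1" "coeff L 1 \<noteq> 0" using c2 by (auto simp: L_def)
  have Pnz: "P q j \<noteq> 0" using Suc by auto
  have Lnz: "L \<noteq> 0" using L1 by auto
  have "degree (P q j * L) = Suc j" using degree_mult_eq[OF Pnz Lnz] L1 Suc by simp
  moreover have "coeff (P q j * L) (Suc j) \<noteq> 0"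
    using lead_coeff_mult[of "P q j" L] L1 Suc \<open>degree (P q j * L) = Suc j\<close> by simp
  ultimately show ?case by (simp add: L_def)
qed

theorem proposition5p2:
  fixes q :: nat and f g :: "nat \<Rightarrow> complex"
  assumes "prime_power q"
    and "\<exists>n\<ge>1. f n \<noteq> 0"
    and "\<exists>n\<ge>1. g n \<noteq> 0"
    and "\<And>n. n \<ge> 1 \<Longrightarrow> g n = (\<Sum>k=1..n. qbinom q (n - 1) (k - 1) * f k)"
  shows "infinite {n. n \<ge> 1 \<and> f n \<noteq> 0} \<or> infinite {n. n \<ge> 1 \<and> g n \<noteq> 0}"
proof (rule ccontr)
  assume "\<not> ?thesis"
  hence fS: "finite {n. n \<ge> 1 \<and> f n \<noteq> 0}" and gS: "finite {n. n \<ge> 1 \<and> g n \<noteq> 0}" by auto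
  have q2: "q \<ge> 2" using pp_ge2[OF assms(1)] .
  define m where "m = Max {n. n \<ge> 1 \<and> f n \<noteq> 0}"
  have mS: "m \<in> {n. n \<ge> 1 \<and> f n \<noteq> 0}" unfolding m_def using fS assms(2)
    by (intro Max_in) auto
  have fz: "f k = 0" if "k > m" for k
  proof (rule ccontr)
    assume "f k \<noteq> 0"
    hence "k \<le> m" unfolding m_def using fS that by (intro Max_ge) auto
    thus False using that by simp
  qed
  define M where "M = m - 1"
  have mM: "m = Suc M" using mS M_def by auto
  define N where "N = (if {n. n \<ge> 1 \<and> g n \<noteq> 0} = {} then 0 else Max {n. n \<ge> 1 \<and> g n \<noteq> 0})"
  have gz: "g k = 0" if "k > N" "k \<ge> 1" for k
  proof (rule ccontr)
    assume "g k \<noteq> 0"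
    hence "k \<in> {n. n \<ge> 1 \<and> g n \<noteq> 0}" using that by simp
    hence "k \<le> N" unfolding N_def using gS by (auto intro: Max_ge)
    thus False using that by simp
  qed
  define G where "G = (\<Sum>j\<le>M. smult (f (Suc j)) (P q j))"
  have cG: "coeff G M = f (Suc M) * coeff (P q M) M"
  proof -
    have "coeff G M = (\<Sum>j\<le>M. f (Suc j) * coeff (P q j) M)"
      unfolding G_def by (simp add: coeff_sum)
    also have "\<dots> = (\<Sum>j\<in>{M}. f (Suc j) * coeff (P q j) M)"
    proof (rule sum.mono_neutral_right)
      show "\<forall>i\<in>{..M} - {M}. f (Suc i) * coeff (P q i) M = 0"
      proof
        fix i assume "i \<in> {..M} - {M}"
        hence "degree (P q i) < M" using P_deg[OF q2, of i] by auto
        thus "f (Suc i) * coeff (P q i) M = 0" by (simp add: coeff_eq_0)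
      qed
    qed auto
    finally show ?thesis by simp
  qed
  have Gnz: "G \<noteq> 0"
  proof
    assume "G = 0"
    hence "coeff G M = 0" by simp
    thus False using cG P_deg[OF q2, of M] mS mM by simp
  qed
  have roots: "poly G (of_nat q ^ n) = 0" if "n \<ge> max M N" for n
  proof -
    have "g (Suc n) = (\<Sum>k=1..Suc n. qbinom q n (k - 1) * f k)" using assms(4)[of "Suc n"] by simp
    also have "\<dots> = (\<Sum>j\<le>n. qbinom q n j * f (Suc j))"
    proof -
      have "(\<Sum>k=1..Suc n. qbinom q n (k - 1) * f k) = (\<Sum>j=0..n. qbinom q n (Suc j - 1) * f (Suc j))"
        by (subst sum.shift_bounds_cl_Suc_ivl[symmetric]) simp
      thus ?thesis by (simp add: atMost_atLeast0)
    qed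
    also have "\<dots> = (\<Sum>j\<le>M. qbinom q n j * f (Suc j))"
    proof (rule sum.mono_neutral_right)
      show "\<forall>i\<in>{..n} - {..M}. qbinom q n i * f (Suc i) = 0"
        using fz mM by auto
    qed (use that in auto)
    also have "\<dots> = poly G (of_nat q ^ n)"
      unfolding G_def poly_sum using P_eval[OF q2] that by (auto intro!: sum.cong)
    finally have "g (Suc n) = poly G (of_nat q ^ n)" .
    moreover have "g (Suc n) = 0" using gz that by auto
    ultimately show ?thesis by simp
  qed
  have "finite {x. poly G x = 0}" using poly_roots_finite[OF Gnz] .
  moreover have "(\<lambda>n. (of_nat q :: complex) ^ n) ` {max M N..} \<subseteq> {x. poly G x = 0}"
    using roots by auto
  moreover have "inj (\<lambda>n. (of_nat q :: complex) ^ n)"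
  proof (rule injI)
    fix a b assume "(of_nat q :: complex) ^ a = of_nat q ^ b"
    hence "(of_nat (q ^ a) :: complex) = of_nat (q ^ b)" by simp
    hence "q ^ a = q ^ b" using of_nat_eq_iff by blast
    thus "a = b" using q2 by (simp add: power_inject_exp)
  qed
  hence "infinite ((\<lambda>n. (of_nat q :: complex) ^ n) ` {max M N..})"
    by (meson finite_imageD infinite_Ici inj_on_subset subset_UNIV)
  ultimately show False by (meson finite_subset)
qed

end
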